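(* Consider the Lur'e system and its Krasovskii regularization $\dot x\in F(x)$ as in the context, and suppose Assumptions 1 and 2 hold (with $\Gamma$, $P$, $\eta$ from Assumption 2). Let $V(x):=\tfrac12 x^\top Px+\sum_{i=1}^p\gamma_i\int_0^{C_ix}\psi_i(\sigma)\,d\sigma$. Then there exist $\alpha_1,\alpha_2,\alpha_3\in\mathcal{K}_\infty$ such that $\alpha_1(|x|)\le V(x)\le\alpha_2(|x|)$ for all $x\in\mathbb{R}^n$ and $\sup\dot{\overline V}_F(x)\le-\alpha_3(V(x))$ for all $x\in\mathbb{R}^n$ (with $\sup\emptyset=-\infty$).
   Context: System: $\dot x=Ax+Bu$, $y=Cx$, $u=-\boldsymbol\psi(y)$, $x\in\mathbb{R}^n$, $u,y\in\mathbb{R}^p$, $A,B,C$ real matrices of compatible sizes, $\boldsymbol\psi(y)=(\psi_1(y_1),\dots,\psi_p(y_p))$. A function $\mathbb{R}\to\mathbb{R}$ is piecewise continuous if on every bounded interval it has finitely many discontinuity points, is continuous between them, and has finite one-sided limits there. Krasovskii regularization: $\boldsymbol\Psi_i(s):=\bigcap_{\delta>0}\overline{\mathrm{co}}\,\psi_i(s+\delta[-1,1])$, $\boldsymbol\Psi(y):=\boldsymbol\Psi_1(y_1)\times\dots\times\boldsymbol\Psi_p(y_p)$, and $F(x):=\{Ax-Bw:w\in\boldsymbol\Psi(Cx)\}$. Assumption 1: for each $i$, $\psi_i$ is piecewise continuous and there is $\zeta_i\in(0,+\infty]$ with $\psi_i(s)(\psi_i(s)-\zeta_is)\le0$ for all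 $s\in\mathbb{R}$; when $\zeta_i=+\infty$ this condition means $\psi_i(s)s\ge0$ for all $s$. Set $Z:=\mathrm{diag}(\zeta_1^{-1},\dots,\zeta_p^{-1})$ with the convention $(+\infty)^{-1}=0$. Assumption 2: there exist a diagonal $\Gamma=\mathrm{diag}(\gamma_1,\dots,\gamma_p)>0$, a symmetric $P>0$ and $\eta>0$ such that $$M:=\begin{bmatrix}PA+A^\top P+\eta I_n & PB-(C+\Gamma CA)^\top\\ B^\top P-(C+\Gamma CA) & -2Z-\Gamma CB-(\Gamma CB)^\top\end{bmatrix}\le0.$$ Generalized gradient of $V$: $\partial V(x)=\{Px+C^\top\Gamma w:w\in\boldsymbol\Psi(Cx)\}$. Set-valued Lie derivative: $\dot{\overline V}_F(x):=\{a\in\mathbb{R}:\exists f\in F(x),\ \langle v,f\rangle=a\ \forall v\in\partial V(x)\}$. $\mathcal{K}_\infty$ denotes continuous strictly increasing unbounded functions $\mathbb{R}_{\ge0}\to\mathbb{R}_{\ge0}$ vanishing at $0$. *)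

theory Defs
  imports "HOL-Analysis.Analysis"
begin

definition piecewise_cont :: "(real \<Rightarrow> real) \<Rightarrow> bool" where
  "piecewise_cont f \<longleftrightarrow>
     (\<forall>a b. finite {s \<in> {a..b}. \<not> isCont f s}) \<and>
     (\<forall>s. (\<exists>l. (f \<longlongrightarrow> l) (at_left s)) \<and> (\<exists>r. (f \<longlongrightarrow> r) (at_right s)))"

definition sector_cond :: "(real \<Rightarrow> real) \<Rightarrow> ereal \<Rightarrow> bool" where
  "sector_cond f z \<longleftrightarrow> 0 < z \<and>
     (\<forall>s. if z = \<infinity> then f s * s \<ge> 0 else f s * (f s - real_of_ereal z * s) \<le> 0)"

definition ereal_recip :: "ereal \<Rightarrow> real" where
  "ereal_recip z = (if z = \<infinity> then 0 else 1 / real_of_ereal z)"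

definition kras :: "(real \<Rightarrow> real) \<Rightarrow> real \<Rightarrow> real set" where
  "kras f s = \<Inter> {closure (convex hull (f ` {s - \<delta>..s + \<delta>})) | \<delta>. \<delta> > 0}"

definition Kras :: "('p \<Rightarrow> real \<Rightarrow> real) \<Rightarrow> real^'p \<Rightarrow> (real^'p) set" where
  "Kras psi y = {w. \<forall>i. w $ i \<in> kras (psi i) (y $ i)}"

definition diagm :: "('p \<Rightarrow> real) \<Rightarrow> real^'p^'p" where
  "diagm d = (\<chi> i j. if i = j then d i else 0)"

definition block_mat ::
  "real^'n^'n \<Rightarrow> real^'p^'n \<Rightarrow> real^'n^'p \<Rightarrow> real^'p^'p \<Rightarrow> real^('n + 'p)^('n + 'p)" where
  "block_mat M11 M12 M21 M22 = (\<chi> i j. case i of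
      Inl a \<Rightarrow> (case j of Inl b \<Rightarrow> M11 $ a $ b | Inr b \<Rightarrow> M12 $ a $ b)
    | Inr a \<Rightarrow> (case j of Inl b \<Rightarrow> M21 $ a $ b | Inr b \<Rightarrow> M22 $ a $ b))"

definition neg_semidef :: "real^'m^'m \<Rightarrow> bool" where
  "neg_semidef M \<longleftrightarrow> transpose M = M \<and> (\<forall>v. v \<bullet> (M *v v) \<le> 0)"

definition pos_def :: "real^'n^'n \<Rightarrow> bool" where
  "pos_def P \<longleftrightarrow> transpose P = P \<and> (\<forall>x. x \<noteq> 0 \<longrightarrow> x \<bullet> (P *v x) > 0)"

definition lmi_M :: "real^'n^'n \<Rightarrow> real^'p^'n \<Rightarrow> real^'n^'p \<Rightarrow> ereal^'p \<Rightarrow>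
    ('p \<Rightarrow> real) \<Rightarrow> real^'n^'n \<Rightarrow> real \<Rightarrow> real^('n + 'p)^('n + 'p)" where
  "lmi_M A B C zeta gamma P eta =
     (let G = diagm gamma; Z = diagm (\<lambda>i. ereal_recip (zeta $ i)); K = C + G ** C ** A in
      block_mat (P ** A + transpose A ** P + eta *\<^sub>R mat 1)
                (P ** B - transpose K)
                (transpose B ** P - K)
                (- (2 *\<^sub>R Z) - G ** C ** B - transpose (G ** C ** B)))"

definition int0 :: "(real \<Rightarrow> real) \<Rightarrow> real \<Rightarrow> real" where
  "int0 f t = (if 0 \<le> t then integral {0..t} f else - integral {t..0} f)"

definition lure_V :: "real^'n^'n \<Rightarrow> real^'n^'p \<Rightarrow> ('p \<Rightarrow> real) \<Rightarrow> ('p \<Rightarrow> real \<Rightarrow> real)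
    \<Rightarrow> real^'n \<Rightarrow> real" where
  "lure_V P C gamma psi x =
     (1/2) * (x \<bullet> (P *v x)) + (\<Sum>i\<in>UNIV. gamma i * int0 (psi i) ((C *v x) $ i))"

definition F_kras :: "real^'n^'n \<Rightarrow> real^'p^'n \<Rightarrow> real^'n^'p \<Rightarrow> ('p \<Rightarrow> real \<Rightarrow> real)
    \<Rightarrow> real^'n \<Rightarrow> (real^'n) set" where
  "F_kras A B C psi x = {A *v x - B *v w | w. w \<in> Kras psi (C *v x)}"

definition gen_grad :: "real^'n^'n \<Rightarrow> real^'n^'p \<Rightarrow> ('p \<Rightarrow> real) \<Rightarrow> ('p \<Rightarrow> real \<Rightarrow> real)
    \<Rightarrow> real^'n \<Rightarrow> (real^'n) set" where
  "gen_grad P C gamma psi x =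
     {P *v x + transpose C *v (diagm gamma *v w) | w. w \<in> Kras psi (C *v x)}"

definition lie_set :: "(real^'n) set \<Rightarrow> (real^'n) set \<Rightarrow> real set" where
  "lie_set dV Fx = {a. \<exists>f\<in>Fx. \<forall>v\<in>dV. v \<bullet> f = a}"

definition class_Kinf :: "(real \<Rightarrow> real) \<Rightarrow> bool" where
  "class_Kinf \<alpha> \<longleftrightarrow> continuous_on {0..} \<alpha> \<and> strict_mono_on {0..} \<alpha> \<and> \<alpha> 0 = 0 \<and>
     (\<forall>s\<ge>0. \<alpha> s \<ge> 0) \<and> filterlim \<alpha> at_top at_top"

end

theory Submission
  imports Defs
begin


lemma sum_UNIV_Plus:
  fixes f :: "('a::finite + 'b::finite) \<Rightarrow> 'c::comm_monoid_add"
  shows "(\<Sum>k\<in>UNIV. f k) = (\<Sum>a\<in>UNIV. f (Inl a)) + (\<Sum>b\<in>UNIV. f (Inr b))"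
proof -
  have "(\<Sum>k\<in>UNIV. f k) = (\<Sum>k\<in>UNIV <+> UNIV. f k)" by simp
  also have "\<dots> = (\<Sum>a\<in>UNIV. f (Inl a)) + (\<Sum>b\<in>UNIV. f (Inr b))"
    by (subst sum.Plus) (auto simp: o_def)
  finally show ?thesis .
qed

lemma block_quad:
  fixes x :: "real^'n" and z :: "real^'p"
  shows "(\<chi> k. case k of Inl a \<Rightarrow> x$a | Inr b \<Rightarrow> z$b) \<bullet>
     (block_mat M11 M12 M21 M22 *v (\<chi> k. case k of Inl a \<Rightarrow> x$a | Inr b \<Rightarrow> z$b))
   = x \<bullet> (M11 *v x) + x \<bullet> (M12 *v z) + z \<bullet> (M21 *v x) + z \<bullet> (M22 *v z)"
  unfolding inner_vec_def matrix_vector_mult_def block_mat_def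
  by (simp add: sum_UNIV_Plus sum_distrib_left distrib_left sum.distrib)

lemma dot_mv: "(u::real^'m) \<bullet> (M *v v) = (transpose M *v u) \<bullet> v"
  by (metis dot_lmul_matrix inner_commute transpose_matrix_vector)

lemma diagm_mv: "(diagm d *v w) $ i = d i * w $ i"
  unfolding diagm_def matrix_vector_mult_def
  by (simp add: if_distrib if_distribR cong: if_cong)

lemma transpose_diagm: "transpose (diagm d) = diagm d"
  unfolding diagm_def transpose_def by (vector)



lemma transpose_add': "transpose (A + B) = transpose A + (transpose B :: real^'a^'b)"
  by (simp add: transpose_def vec_eq_iff)
lemma transpose_diff': "transpose (A - B) = transpose A - (transpose B :: real^'a^'b)"
  by (simp add: transpose_def vec_eq_iff)
lemma uminus_mv: "(- M) *v x = - (M *v (x::real^'a))"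
  by (simp add: matrix_vector_mult_def vec_eq_iff sum_negf)
lemma mv_uminus: "M *v (- x) = - (M *v (x::real^'a))"
  by (simp add: matrix_vector_mult_def vec_eq_iff sum_negf)
lemma scaleR_mv: "(k *\<^sub>R M) *v x = k *\<^sub>R (M *v (x::real^'a))"
  by (simp add: scaleR_matrix_vector_assoc)

lemma lmi_ineq:
  fixes A :: "real^'n^'n" and B :: "real^'p^'n" and C :: "real^'n^'p"
    and zeta :: "ereal^'p" and P :: "real^'n^'n" and x :: "real^'n" and w :: "real^'p"
  assumes LMI: "neg_semidef (lmi_M A B C zeta gamma P eta)"
    and Psym: "transpose P = P"
  shows "2 * ((P *v x + transpose C *v (diagm gamma *v w)) \<bullet> (A *v x - B *v w))
     \<le> - eta * (x \<bullet> x) - 2 * ((C *v x) \<bullet> w) + 2 * (w \<bullet> (diagm (\<lambda>i. ereal_recip (zeta $ i)) *v w))"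
proof -
  define G where "G = diagm gamma"
  define Z where "Z = diagm (\<lambda>i. ereal_recip (zeta $ i))"
  define v where "v = (\<chi> k. case k of Inl a \<Rightarrow> x$a | Inr b \<Rightarrow> (-w)$b)"
  have "v \<bullet> (lmi_M A B C zeta gamma P eta *v v) \<le> 0"
    using LMI unfolding neg_semidef_def by blast
  also have "v \<bullet> (lmi_M A B C zeta gamma P eta *v v) =
     x \<bullet> ((P ** A + transpose A ** P + eta *\<^sub>R mat 1) *v x)
     + x \<bullet> ((P ** B - transpose (C + G ** C ** A)) *v (-w))
     + (-w) \<bullet> ((transpose B ** P - (C + G ** C ** A)) *v x)
     + (-w) \<bullet> ((- (2 *\<^sub>R Z) - G ** C ** B - transpose (G ** C ** B)) *v (-w))"
    unfolding lmi_M_def Let_def v_def G_def Z_def by (rule block_quad)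
  finally have Q: "\<dots> \<le> 0" .
  have GT: "transpose G = G" "transpose Z = Z" unfolding G_def Z_def by (simp_all add: transpose_diagm)
  have e1: "x \<bullet> (P *v (A *v x)) = (P *v x) \<bullet> (A *v x)" using dot_mv[of x P] Psym by simp
  have e2: "x \<bullet> (transpose A *v (P *v x)) = (A *v x) \<bullet> (P *v x)" using dot_mv[of x "transpose A"] by simp
  have e3: "x \<bullet> (P *v (B *v w)) = (P *v x) \<bullet> (B *v w)" using dot_mv[of x P] Psym by simp
  have e4: "x \<bullet> (transpose C *v w) = (C *v x) \<bullet> w" using dot_mv[of x "transpose C"] by simp
  have e5: "x \<bullet> (transpose (G ** C ** A) *v w) = w \<bullet> (G *v (C *v (A *v x)))"
    using dot_mv[of x "transpose (G ** C ** A)"] by (simp add: matrix_vector_mul_assoc[symmetric] inner_commute)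
  have e6: "w \<bullet> (transpose B *v (P *v x)) = (P *v x) \<bullet> (B *v w)"
    using dot_mv[of w "transpose B"] by (simp add: inner_commute)
  have e7: "w \<bullet> (transpose (G ** C ** B) *v w) = w \<bullet> (G *v (C *v (B *v w)))"
    using dot_mv[of w "transpose (G ** C ** B)"] by (simp add: matrix_vector_mul_assoc[symmetric] inner_commute)
  have e8: "(transpose C *v (G *v w)) \<bullet> (A *v x) = w \<bullet> (G *v (C *v (A *v x)))"
    using dot_mv[of "G *v w" C "A *v x"] dot_mv[of w G] GT by (simp add: inner_commute)
  have e9: "(transpose C *v (G *v w)) \<bullet> (B *v w) = w \<bullet> (G *v (C *v (B *v w)))"
    using dot_mv[of "G *v w" C "B *v w"] dot_mv[of w G] GT by (simp add: inner_commute)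
  have t1: "x \<bullet> ((P ** A + transpose A ** P + eta *\<^sub>R mat 1) *v x) = 2 * ((P *v x) \<bullet> (A *v x)) + eta * (x \<bullet> x)"
    by (simp del: transpose_matrix_vector add: matrix_vector_mult_add_rdistrib scaleR_mv
        matrix_vector_mul_assoc[symmetric] inner_add e1 e2 inner_commute)
  have t2: "x \<bullet> ((P ** B - transpose (C + G ** C ** A)) *v (-w)) = - ((P *v x) \<bullet> (B *v w)) + (C *v x) \<bullet> w + w \<bullet> (G *v (C *v (A *v x)))"
    by (simp del: transpose_matrix_vector add: matrix_vector_mult_diff_rdistrib matrix_vector_mult_add_rdistrib transpose_add'
        matrix_vector_mul_assoc[symmetric] inner_add inner_diff e3 e4 e5 inner_commute mv_uminus)
  have t3: "(-w) \<bullet> ((transpose B ** P - (C + G ** C ** A)) *v x) = - ((P *v x) \<bullet> (B *v w)) + (C *v x) \<bullet> w + w \<bullet> (G *v (C *v (A *v x)))"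
    by (simp del: transpose_matrix_vector add: matrix_vector_mult_diff_rdistrib matrix_vector_mult_add_rdistrib
        matrix_vector_mul_assoc[symmetric] inner_add inner_diff e6 inner_commute)
  have t4: "(-w) \<bullet> ((- (2 *\<^sub>R Z) - G ** C ** B - transpose (G ** C ** B)) *v (-w)) = - 2 * (w \<bullet> (Z *v w)) - 2 * (w \<bullet> (G *v (C *v (B *v w))))"
    by (simp del: transpose_matrix_vector add: matrix_vector_mult_diff_rdistrib uminus_mv scaleR_mv
        matrix_vector_mul_assoc[symmetric] inner_add inner_diff e7 matrix_vector_mult_diff_distrib mv_uminus)
  have L: "(P *v x + transpose C *v (G *v w)) \<bullet> (A *v x - B *v w) = (P *v x) \<bullet> (A *v x) - (P *v x) \<bullet> (B *v w) + w \<bullet> (G *v (C *v (A *v x))) - w \<bullet> (G *v (C *v (B *v w)))"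
    by (simp del: transpose_matrix_vector add: inner_add inner_diff e8 e9)
  show ?thesis
    using Q unfolding G_def[symmetric] Z_def[symmetric] t1 t2 t3 t4 L
    by (simp add: inner_commute)
qed



lemma kras_sub:
  assumes "w \<in> kras f y" "\<delta> > 0" "f ` {y - \<delta>..y + \<delta>} \<subseteq> T" "closed T" "convex T"
  shows "w \<in> T"
proof -
  have "w \<in> closure (convex hull (f ` {y - \<delta>..y + \<delta>}))"
    using assms(1,2) unfolding kras_def by blast
  moreover have "closure (convex hull (f ` {y - \<delta>..y + \<delta>})) \<subseteq> T"
  proof (rule closure_minimal)
    show "convex hull (f ` {y - \<delta>..y + \<delta>}) \<subseteq> T"
      by (rule hull_minimal) (use assms(3-5) in auto)
  qed (use assms in auto)
  ultimately show ?thesis by blast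
qed

lemma kras_sector:
  assumes S: "sector_cond f z" and w: "w \<in> kras f y"
  shows "ereal_recip z * w\<^sup>2 \<le> w * y"
proof (cases "z = \<infinity>")
  case True
  then have fs: "\<And>s. f s * s \<ge> 0" using S unfolding sector_cond_def by auto
  have "w * y \<ge> 0"
  proof (cases "y > 0")
    case True
    have "f ` {y - y/2..y + y/2} \<subseteq> {0..}"
    proof
      fix t assume "t \<in> f ` {y - y/2..y + y/2}"
      then obtain s where s: "s \<in> {y - y/2..y + y/2}" "t = f s" by auto
      have "s > 0" using s True by auto
      with fs[of s] s show "t \<in> {0..}" by (simp add: zero_le_mult_iff)
    qed
    then have "w \<in> {0..}" using kras_sub[OF w, of "y/2"] True by auto
    then show ?thesis using True by simp
  next
    case False
    show ?thesis
    proof (cases "y < 0")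
      case True
      have "f ` {y - (-y)/2..y + (-y)/2} \<subseteq> {..0}"
      proof
        fix t assume "t \<in> f ` {y - (-y)/2..y + (-y)/2}"
        then obtain s where s: "s \<in> {y - (-y)/2..y + (-y)/2}" "t = f s" by auto
        have "s < 0" using s True by auto
        with fs[of s] s show "t \<in> {..0}" by (simp add: zero_le_mult_iff)
      qed
      then have "w \<in> {..0}" using kras_sub[OF w, of "(-y)/2"] True by auto
      then show ?thesis using True by (simp add: mult_nonpos_nonpos)
    next
      case False
      then have "y = 0" using \<open>\<not> y > 0\<close> by simp
      then show ?thesis by simp
    qed
  qed
  then show ?thesis using True by (simp add: ereal_recip_def)
next
  case False
  define r where "r = real_of_ereal z"
  have zpos: "z > 0" using S unfolding sector_cond_def by auto
  have rpos: "r > 0" using zpos False unfolding r_def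
    by (cases z) auto
  have fs: "\<And>s. f s * (f s - r * s) \<le> 0" using S False unfolding sector_cond_def r_def by auto
  have fb: "min 0 (r * s) \<le> f s \<and> f s \<le> max 0 (r * s)" for s
  proof (rule ccontr)
    assume "\<not> ?thesis"
    then have "f s * (f s - r * s) > 0"
      by (auto simp: mult_pos_pos mult_neg_neg)
    with fs[of s] show False by simp
  qed
  have wb: "min 0 (r * (y - \<delta>)) \<le> w \<and> w \<le> max 0 (r * (y+\<delta>))" if "\<delta> > 0" for \<delta>
  proof -
    have "f ` {y - \<delta>..y + \<delta>} \<subseteq> {min 0 (r * (y - \<delta>))..max 0 (r * (y+\<delta>))}"
    proof
      fix t assume "t \<in> f ` {y - \<delta>..y + \<delta>}"
      then obtain s where s: "s \<in> {y - \<delta>..y + \<delta>}" "t = f s" by auto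
      have "r * s \<le> r * (y + \<delta>)" "r * (y - \<delta>) \<le> r * s" using s rpos by auto
      with fb[of s] s show "t \<in> {min 0 (r * (y - \<delta>))..max 0 (r * (y+\<delta>))}" by auto
    qed
    from kras_sub[OF w that this] show ?thesis by auto
  qed
  have up: "w \<le> max 0 (r * y)"
  proof (rule ccontr)
    assume a: "\<not> ?thesis"
    define \<delta> where "\<delta> = (w - r * y) / (2 * r)"
    have d: "\<delta> > 0" using a rpos unfolding \<delta>_def by auto
    have "r * (y + \<delta>) = (w + r * y)/2" unfolding \<delta>_def using rpos by (simp add: field_simps)
    with wb[OF d] a show False by (auto simp: max_def min_def split: if_splits)
  qed
  have lo: "min 0 (r * y) \<le> w"
  proof (rule ccontr)
    assume a: "\<not> ?thesis"
    define \<delta> where "\<delta> = (r * y - w) / (2 * r)"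
    have d: "\<delta> > 0" using a rpos unfolding \<delta>_def by auto
    have "r * (y - \<delta>) = (w + r * y)/2" unfolding \<delta>_def using rpos by (simp add: field_simps)
    with wb[OF d] a show False by (auto simp: max_def min_def split: if_splits)
  qed
  have "w * (w - r * y) \<le> 0"
    using up lo by (cases "w \<ge> 0") (auto simp: mult_nonneg_nonpos mult_nonpos_nonneg max_def min_def split: if_splits)
  then have "w\<^sup>2 \<le> r * (w * y)" by (simp add: power2_eq_square algebra_simps)
  then have "w\<^sup>2 / r \<le> w * y" using rpos by (simp add: divide_le_eq mult.commute)
  then show ?thesis using False by (simp add: ereal_recip_def r_def)
qed



lemma pc_local_bdd:
  assumes "piecewise_cont f"
  shows "\<exists>d>0. \<exists>M. \<forall>t. \<bar>t - s\<bar> < d \<longrightarrow> \<bar>f t\<bar> \<le> M"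
proof -
  obtain l r where l: "(f \<longlongrightarrow> l) (at_left s)" and r: "(f \<longlongrightarrow> r) (at_right s)"
    using assms unfolding piecewise_cont_def by blast
  have "eventually (\<lambda>t. dist (f t) l < 1) (at_left s)" using tendstoD[OF l] by simp
  then obtain b where b: "b < s" "\<And>t. b < t \<Longrightarrow> t < s \<Longrightarrow> dist (f t) l < 1"
    unfolding eventually_at_left_field by blast
  have "eventually (\<lambda>t. dist (f t) r < 1) (at_right s)" using tendstoD[OF r] by simp
  then obtain c where c: "s < c" "\<And>t. s < t \<Longrightarrow> t < c \<Longrightarrow> dist (f t) r < 1"
    unfolding eventually_at_right_field by blast
  define d where "d = min (s - b) (c - s)"
  define M where "M = max (\<bar>l\<bar> + 1) (max (\<bar>r\<bar> + 1) \<bar>f s\<bar>)"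
  have "\<forall>t. \<bar>t - s\<bar> < d \<longrightarrow> \<bar>f t\<bar> \<le> M"
  proof (intro allI impI)
    fix t assume t: "\<bar>t - s\<bar> < d"
    consider "t < s" | "t = s" | "t > s" by linarith
    then show "\<bar>f t\<bar> \<le> M"
    proof cases
      case 1
      then have "dist (f t) l < 1" using b t unfolding d_def by auto
      then show ?thesis unfolding M_def dist_real_def by linarith
    next
      case 2 then show ?thesis unfolding M_def by simp
    next
      case 3
      then have "dist (f t) r < 1" using c t unfolding d_def by auto
      then show ?thesis unfolding M_def dist_real_def by linarith
    qed
  qed
  moreover have "d > 0" using b c unfolding d_def by simp
  ultimately show ?thesis by blast
qed

lemma pc_bdd:
  assumes "piecewise_cont f"
  shows "\<exists>M. \<forall>t\<in>{a..b}. \<bar>f t\<bar> \<le> M"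
proof -
  obtain d M where dM: "\<And>s. d s > 0" "\<And>s t. \<bar>t - s\<bar> < d s \<Longrightarrow> \<bar>f t\<bar> \<le> M s"
    using pc_local_bdd[OF assms] by metis
  have "compact {a..b}" by simp
  moreover have "\<And>s. s \<in> {a..b} \<Longrightarrow> open (ball s (d s))" by simp
  moreover have "{a..b} \<subseteq> (\<Union>s\<in>{a..b}. ball s (d s))" using dM(1) by auto
  ultimately obtain D where D: "D \<subseteq> {a..b}" "finite D" "{a..b} \<subseteq> (\<Union>s\<in>D. ball s (d s))"
    by (rule compactE_image)
  have "\<forall>t\<in>{a..b}. \<bar>f t\<bar> \<le> Max (insert 0 (M ` D))"
  proof
    fix t assume "t \<in> {a..b}"
    then obtain s where s: "s \<in> D" "t \<in> ball s (d s)" using D by blast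
    then have "\<bar>f t\<bar> \<le> M s" using dM(2)[of t s] by (simp add: dist_real_def abs_minus_commute)
    also have "M s \<le> Max (insert 0 (M ` D))" using s D by auto
    finally show "\<bar>f t\<bar> \<le> Max (insert 0 (M ` D))" .
  qed
  then show ?thesis by blast
qed

lemma int_finite_discont:
  fixes g :: "real \<Rightarrow> real"
  assumes fin: "finite {s\<in>{a..b}. \<not> isCont g s}" and bd: "\<forall>s\<in>{a..b}. \<bar>g s\<bar> \<le> M"
  shows "g integrable_on {a..b}"
proof -
  define D where "D = {s\<in>{a..b}. \<not> isCont g s}"
  define S where "S = {a..b} - D"
  have cont: "continuous_on S g"
    by (rule continuous_at_imp_continuous_on) (auto simp: S_def D_def)
  have "D \<in> sets lebesgue" using fin D_def negligible_finite negligible_imp_sets by blast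
  moreover have "{a..b} \<in> sets lebesgue" using lmeasurable_cbox[of a b] by (simp add: fmeasurableD)
  ultimately have Sl: "S \<in> sets lebesgue" unfolding S_def by blast
  have Slm: "S \<in> lmeasurable"
    by (rule bounded_set_imp_lmeasurable[OF _ Sl]) (auto simp: S_def intro: bounded_subset[of "{a..b}"])
  have meas: "g \<in> borel_measurable (lebesgue_on S)"
    by (rule continuous_imp_measurable_on_sets_lebesgue[OF cont Sl])
  have bdS: "\<And>x. x \<in> S \<Longrightarrow> norm (g x) \<le> M" using bd unfolding S_def by auto
  have "g integrable_on S"
    by (rule measurable_bounded_by_integrable_imp_integrable[OF meas integrable_on_const[OF Slm] bdS Sl])
  moreover have "{x \<in> S - {a..b}. g x \<noteq> 0} = {}" unfolding S_def by blast
  then have "negligible {x \<in> S - {a..b}. g x \<noteq> 0}" by (metis negligible_empty)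
  moreover have "{x \<in> {a..b} - S. g x \<noteq> 0} \<subseteq> D" unfolding S_def by blast
  then have "negligible {x \<in> {a..b} - S. g x \<noteq> 0}"
    using negligible_subset negligible_finite fin unfolding D_def by blast
  ultimately show ?thesis
    by (rule integrable_spike_set)
qed

lemma pc_integrable:
  assumes "piecewise_cont f"
  shows "f integrable_on {a..b}" "(\<lambda>s. \<bar>f s\<bar>) integrable_on {a..b}"
proof -
  obtain M where M: "\<forall>t\<in>{a..b}. \<bar>f t\<bar> \<le> M" using pc_bdd[OF assms] by blast
  have fin: "finite {s\<in>{a..b}. \<not> isCont f s}" using assms unfolding piecewise_cont_def by blast
  show "f integrable_on {a..b}" by (rule int_finite_discont[OF fin M])
  have "{s\<in>{a..b}. \<not> isCont (\<lambda>s. \<bar>f s\<bar>) s} \<subseteq> {s\<in>{a..b}. \<not> isCont f s}"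
    by (auto intro: continuous_intros)
  then have fin2: "finite {s\<in>{a..b}. \<not> isCont (\<lambda>s. \<bar>f s\<bar>) s}" using fin finite_subset by blast
  show "(\<lambda>s. \<bar>f s\<bar>) integrable_on {a..b}" by (rule int_finite_discont[OF fin2]) (use M in auto)
qed



lemma sector_sign:
  assumes "sector_cond f z" shows "f s * s \<ge> 0"
proof (cases "z = \<infinity>")
  case True then show ?thesis using assms unfolding sector_cond_def by auto
next
  case False
  define r where "r = real_of_ereal z"
  have zpos: "z > 0" using assms unfolding sector_cond_def by auto
  have rpos: "r > 0" using zpos False unfolding r_def by (cases z) auto
  have fs: "f s * (f s - r * s) \<le> 0" using assms False unfolding sector_cond_def r_def by auto
  show ?thesis
  proof (rule ccontr)
    assume "\<not> ?thesis"
    then have "f s * s < 0" by simp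
    then have "(f s > 0 \<and> s < 0) \<or> (f s < 0 \<and> s > 0)" by (auto simp: mult_less_0_iff)
    then have "f s * (f s - r * s) > 0"
    proof
      assume a: "f s > 0 \<and> s < 0"
      then have "r * s < 0" using rpos by (simp add: mult_pos_neg)
      then show ?thesis using a by (intro mult_pos_pos) auto
    next
      assume a: "f s < 0 \<and> s > 0"
      then have "r * s > 0" using rpos by simp
      then show ?thesis using a by (intro mult_neg_neg) auto
    qed
    with fs show False by simp
  qed
qed

lemma int0_repr:
  fixes h :: "real \<Rightarrow> real"
  assumes int: "\<And>a b. h integrable_on {a..b}" and t: "t \<in> {-K..K}"
  shows "int0 h t = integral {-K..t} h - integral {-K..0} h"
proof (cases "t \<ge> 0")
  case True
  have "integral {-K..0} h + integral {0..t} h = integral {-K..t} h"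
    by (rule Henstock_Kurzweil_Integration.integral_combine) (use True t int in auto)
  then show ?thesis using True unfolding int0_def by simp
next
  case False
  have "integral {-K..t} h + integral {t..0} h = integral {-K..0} h"
    by (rule Henstock_Kurzweil_Integration.integral_combine) (use False t int in auto)
  then show ?thesis using False unfolding int0_def by simp
qed

lemma int0_isCont:
  fixes h :: "real \<Rightarrow> real"
  assumes int: "\<And>a b. h integrable_on {a..b}"
  shows "isCont (int0 h) t"
proof -
  define K where "K = \<bar>t\<bar> + 1"
  have "continuous_on {-K..K} (\<lambda>s. integral {-K..s} h - integral {-K..0} h)"
    by (intro continuous_intros indefinite_integral_continuous_1 int)
  then have "continuous_on {-K..K} (int0 h)"
    by (rule continuous_on_eq) (use int0_repr[OF int] in auto)
  then have "continuous_on {-K<..<K} (int0 h)"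
    by (rule continuous_on_subset) auto
  moreover have "t \<in> {-K<..<K}" unfolding K_def by auto
  ultimately show ?thesis
    using continuous_on_eq_continuous_at[OF open_greaterThanLessThan, of "-K" K] by blast
qed

lemma int0_mono:
  fixes h :: "real \<Rightarrow> real"
  assumes int: "\<And>a b. h integrable_on {a..b}" and nn: "\<And>s. h s \<ge> 0" and ab: "a \<le> b"
  shows "int0 h a \<le> int0 h b"
proof -
  define K where "K = \<bar>a\<bar> + \<bar>b\<bar>"
  have "integral {-K..a} h \<le> integral {-K..b} h"
    by (rule integral_subset_le) (use ab int nn in auto)
  moreover have "int0 h a = integral {-K..a} h - integral {-K..0} h"
    by (rule int0_repr[OF int]) (auto simp: K_def)
  moreover have "int0 h b = integral {-K..b} h - integral {-K..0} h"
    by (rule int0_repr[OF int]) (auto simp: K_def)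
  ultimately show ?thesis by linarith
qed

lemma int0_zero: "int0 h 0 = 0" unfolding int0_def by simp

lemma int0_psi_eq:
  assumes pc: "piecewise_cont f" and sg: "\<And>s. f s * s \<ge> 0"
  shows "int0 f t = \<bar>int0 (\<lambda>s. \<bar>f s\<bar>) t\<bar>"
proof (cases "t \<ge> 0")
  case True
  have "integral {0..t} f = integral {0..t} (\<lambda>s. \<bar>f s\<bar>)"
  proof (rule integral_spike[of "{0}"])
    fix s assume "s \<in> {0..t} - {0}"
    then have "s > 0" by auto
    then have "f s \<ge> 0" using sg[of s] by (simp add: zero_le_mult_iff)
    then show "\<bar>f s\<bar> = f s" by simp
  qed auto
  moreover have "integral {0..t} (\<lambda>s. \<bar>f s\<bar>) \<ge> 0"
    by (rule integral_nonneg) (use pc_integrable[OF pc] in auto)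
  ultimately show ?thesis using True unfolding int0_def by simp
next
  case False
  have "integral {t..0} f = integral {t..0} (\<lambda>s. - \<bar>f s\<bar>)"
  proof (rule integral_spike[of "{0}"])
    fix s assume "s \<in> {t..0} - {0}"
    then have "s < 0" by auto
    then have "f s \<le> 0" using sg[of s] by (simp add: zero_le_mult_iff)
    then show "- \<bar>f s\<bar> = f s" by simp
  qed auto
  moreover have "integral {t..0} (\<lambda>s. \<bar>f s\<bar>) \<ge> 0"
    by (rule integral_nonneg) (use pc_integrable[OF pc] in auto)
  ultimately show ?thesis using False unfolding int0_def by (simp add: integral_neg)
qed



lemma inv_props:
  fixes f :: "real \<Rightarrow> real"
  assumes cont: "\<And>x. isCont f x" and sm: "strict_mono f" and f0: "f 0 = 0"
    and ge: "\<And>r. r \<ge> 0 \<Longrightarrow> f r \<ge> r" and le: "\<And>r. r \<le> 0 \<Longrightarrow> f r \<le> r"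
  shows "\<And>y. f (inv f y) = y" "\<And>x. inv f (f x) = x" "strict_mono (inv f)"
    "\<And>y. isCont (inv f) y" "inv f 0 = 0"
proof -
  have surj: "\<exists>x. f x = y" for y
  proof (cases "y \<ge> 0")
    case True
    have "\<exists>x\<ge>0. x \<le> y \<and> f x = y"
      by (rule IVT) (use True f0 ge cont in auto)
    then show ?thesis by blast
  next
    case False
    have "\<exists>x\<ge>y. x \<le> 0 \<and> f x = y"
      by (rule IVT) (use False f0 le cont in auto)
    then show ?thesis by blast
  qed
  have inj: "inj f" using sm strict_mono_imp_inj_on by blast
  have "surj f" using surj by (metis surjI)
  then show fi: "\<And>y. f (inv f y) = y" by (simp add: surj_f_inv_f)
  show ifx: "\<And>x. inv f (f x) = x" using inj by simp
  show smi: "strict_mono (inv f)"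
  proof (rule strict_monoI)
    fix a b :: real assume "a < b"
    show "inv f a < inv f b"
    proof (rule ccontr)
      assume "\<not> ?thesis"
      then have "inv f b \<le> inv f a" by simp
      then have "f (inv f b) \<le> f (inv f a)" using sm by (simp add: strict_mono_less_eq)
      with fi \<open>a < b\<close> show False by simp
    qed
  qed
  show "inv f 0 = 0" using ifx[of 0] f0 by simp
  show "isCont (inv f) y" for y
  proof -
    define x where "x = inv f y"
    have "continuous_on (f ` {x-1..x+1}) (inv f)"
      by (rule continuous_on_inv) (use cont ifx in \<open>auto intro: continuous_at_imp_continuous_on\<close>)
    moreover have "{f (x-1)<..<f (x+1)} \<subseteq> f ` {x-1..x+1}"
    proof
      fix z assume z: "z \<in> {f (x-1)<..<f (x+1)}"
      have "inv f z > x - 1"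
        using z strict_monoD[OF smi, of "f (x-1)" z] ifx by auto
      moreover have "inv f z < x + 1"
        using z strict_monoD[OF smi, of z "f (x+1)"] ifx by auto
      ultimately show "z \<in> f ` {x-1..x+1}" using fi[of z] by (metis atLeastAtMost_iff imageI less_imp_le)
    qed
    ultimately have "continuous_on {f (x-1)<..<f (x+1)} (inv f)" by (rule continuous_on_subset)
    moreover have "y \<in> {f (x-1)<..<f (x+1)}"
      using strict_monoD[OF sm, of "x-1" x] strict_monoD[OF sm, of x "x+1"] fi[of y] unfolding x_def by auto
    ultimately show ?thesis
      using continuous_on_eq_continuous_at[OF open_greaterThanLessThan] by blast
  qed
qed



lemma mat_bound: "\<exists>K>0. \<forall>x. norm ((M::real^'a^'b) *v x) \<le> K * norm x"
proof -
  obtain K where "K > 0" "\<And>x. norm (M *v x) \<le> norm x * K"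
    using bounded_linear.pos_bounded[OF matrix_vector_mul_bounded_linear[of M]] by blast
  then show ?thesis by (metis mult.commute)
qed

lemma quad_upper: "\<exists>K>0. \<forall>x. x \<bullet> ((P::real^'n^'n) *v x) \<le> K * (norm x)\<^sup>2"
proof -
  obtain K where K: "K > 0" "\<And>x. norm (P *v x) \<le> K * norm x" using mat_bound by blast
  have "x \<bullet> (P *v x) \<le> K * (norm x)\<^sup>2" for x
  proof -
    have "x \<bullet> (P *v x) \<le> norm x * norm (P *v x)" by (rule norm_cauchy_schwarz)
    also have "\<dots> \<le> norm x * (K * norm x)" using K by (simp add: mult_left_mono)
    finally show ?thesis by (simp add: power2_eq_square algebra_simps)
  qed
  then show ?thesis using K by blast
qed

lemma quad_scale: "(c *\<^sub>R x) \<bullet> ((P::real^'n^'n) *v (c *\<^sub>R x)) = c\<^sup>2 * (x \<bullet> (P *v x))"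
  by (simp add: matrix_vector_mult_scaleR power2_eq_square)

lemma quad_lower:
  assumes "pos_def (P::real^'n^'n)"
  shows "\<exists>m>0. \<forall>x. m * (norm x)\<^sup>2 \<le> x \<bullet> (P *v x)"
proof -
  have pd: "\<And>x. x \<noteq> 0 \<Longrightarrow> x \<bullet> (P *v x) > 0" using assms unfolding pos_def_def by blast
  obtain i :: 'n where True by blast
  have ne: "sphere (0::real^'n) 1 \<noteq> {}"
  proof -
    have "axis i 1 \<in> sphere (0::real^'n) 1" using norm_axis_1[of i] by simp
    then show ?thesis by blast
  qed
  have "continuous_on (sphere 0 1) (\<lambda>x::real^'n. x \<bullet> (P *v x))"
    by (intro continuous_intros linear_continuous_on matrix_vector_mul_bounded_linear)
  then obtain u where u: "u \<in> sphere 0 1" "\<And>y. y \<in> sphere 0 1 \<Longrightarrow> u \<bullet> (P *v u) \<le> y \<bullet> (P *v y)"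
    using continuous_attains_inf[OF compact_sphere ne] by blast
  define m where "m = u \<bullet> (P *v u)"
  have "u \<noteq> 0" using u(1) by auto
  then have mpos: "m > 0" unfolding m_def using pd by blast
  have "m * (norm x)\<^sup>2 \<le> x \<bullet> (P *v x)" for x
  proof (cases "x = 0")
    case True then show ?thesis by simp
  next
    case False
    define y where "y = (1 / norm x) *\<^sub>R x"
    have y: "y \<in> sphere 0 1" using False unfolding y_def by simp
    have x: "x = norm x *\<^sub>R y" using False unfolding y_def by simp
    have "x \<bullet> (P *v x) = (norm x)\<^sup>2 * (y \<bullet> (P *v y))" by (subst x, subst x) (rule quad_scale)
    moreover have "m \<le> y \<bullet> (P *v y)" using u(2)[OF y] unfolding m_def .
    ultimately show ?thesis by (metis mult.commute mult_right_mono zero_le_power2)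
  qed
  then show ?thesis using mpos by blast
qed


lemma rr_mono:
  fixes r s :: real assumes "r < s" shows "r * \<bar>r\<bar> \<le> s * \<bar>s\<bar>"
proof (cases "r \<ge> 0")
  case True
  then show ?thesis using assms by (simp add: mult_mono)
next
  case False
  show ?thesis
  proof (cases "s \<ge> 0")
    case True
    then show ?thesis using False by (simp add: mult_nonpos_nonneg order_trans[of _ 0])
  next
    case F2: False
    have "(-s) * (-s) \<le> (-r) * (-r)" using assms F2 by (intro mult_mono) auto
    then show ?thesis using False F2 by simp
  qed
qed

lemma Kinf_intro:
  fixes \<alpha> :: "real \<Rightarrow> real"
  assumes "continuous_on {0..} \<alpha>" "\<And>r s. 0 \<le> r \<Longrightarrow> r < s \<Longrightarrow> \<alpha> r < \<alpha> s" "\<alpha> 0 = 0"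
    "filterlim \<alpha> at_top at_top"
  shows "class_Kinf \<alpha>"
proof -
  have "strict_mono_on {0..} \<alpha>" by (rule strict_mono_onI) (use assms(2) in auto)
  moreover have "\<forall>s\<ge>0. \<alpha> s \<ge> 0"
  proof (intro allI impI)
    fix s :: real assume "s \<ge> 0"
    then show "\<alpha> s \<ge> 0" using assms(2)[of 0 s] assms(3) by (cases "s = 0") auto
  qed
  ultimately show ?thesis using assms unfolding class_Kinf_def by blast
qed

theorem proposition1:
  fixes A :: "real^'n^'n" and B :: "real^'p^'n" and C :: "real^'n^'p"
    and psi :: "'p \<Rightarrow> real \<Rightarrow> real" and zeta :: "ereal^'p"
    and gamma :: "'p \<Rightarrow> real" and P :: "real^'n^'n" and eta :: real
  assumes A1: "\<forall>i. piecewise_cont (psi i) \<and> sector_cond (psi i) (zeta $ i)"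
    and gamma_pos: "\<forall>i. gamma i > 0"
    and P_pos: "pos_def P"
    and eta_pos: "eta > 0"
    and LMI: "neg_semidef (lmi_M A B C zeta gamma P eta)"
  shows "\<exists>\<alpha>1 \<alpha>2 \<alpha>3. class_Kinf \<alpha>1 \<and> class_Kinf \<alpha>2 \<and> class_Kinf \<alpha>3 \<and>
    (\<forall>x. \<alpha>1 (norm x) \<le> lure_V P C gamma psi x \<and> lure_V P C gamma psi x \<le> \<alpha>2 (norm x)) \<and>
    (\<forall>x. Sup (ereal ` lie_set (gen_grad P C gamma psi x) (F_kras A B C psi x))
           \<le> - ereal (\<alpha>3 (lure_V P C gamma psi x)))"
proof -
  obtain m where m: "m > 0" "\<And>x. m * (norm x)\<^sup>2 \<le> x \<bullet> (P *v x)" using quad_lower[OF P_pos] by blast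
  obtain Kp where Kp: "Kp > 0" "\<And>x. x \<bullet> (P *v x) \<le> Kp * (norm x)\<^sup>2" using quad_upper by blast
  obtain c where c: "c > 0" "\<And>x. norm (C *v x) \<le> c * norm x" using mat_bound by blast
  have pc: "\<And>i. piecewise_cont (psi i)" and sec: "\<And>i. sector_cond (psi i) (zeta $ i)" using A1 by auto
  define H where "H i t = int0 (\<lambda>s. \<bar>psi i s\<bar>) t" for i t
  have intH: "\<And>i a b. (\<lambda>s. \<bar>psi i s\<bar>) integrable_on {a..b}" using pc_integrable(2)[OF pc] by blast
  have Hcont: "\<And>i t. isCont (H i) t" unfolding H_def[abs_def] by (rule int0_isCont[OF intH])
  have Hmono: "\<And>i a b. a \<le> b \<Longrightarrow> H i a \<le> H i b" unfolding H_def by (rule int0_mono[OF intH]) auto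
  have H0: "\<And>i. H i 0 = 0" unfolding H_def by (rule int0_zero)
  have Veq: "\<And>i t. int0 (psi i) t = \<bar>H i t\<bar>" unfolding H_def
    by (rule int0_psi_eq[OF pc sector_sign[OF sec]])
  define g where "g i r = H i r - H i (-r)" for i r
  have gmono: "\<And>i r r'. r \<le> r' \<Longrightarrow> g i r \<le> g i r'" unfolding g_def using Hmono
    by (smt (verit))
  have g0: "\<And>i. g i 0 = 0" unfolding g_def using H0 by simp
  have gcont: "\<And>i r. isCont (g i) r" unfolding g_def[abs_def]
    using Hcont by (intro continuous_intros) (auto intro: continuous_at_compose[OF _ Hcont, unfolded o_def])
  have absH: "\<And>i t R. \<bar>t::real\<bar> \<le> R \<Longrightarrow> \<bar>H i t\<bar> \<le> g i R"
  proof -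
    fix i and t R :: real assume tR: "\<bar>t\<bar> \<le> R"
    have "H i (-R) \<le> H i t" "H i t \<le> H i R" using tR by (auto intro!: Hmono)
    moreover have "H i (-R) \<le> 0" "0 \<le> H i R" using tR H0[of i] Hmono[of "-R" 0 i] Hmono[of 0 R i] by auto
    ultimately show "\<bar>H i t\<bar> \<le> g i R" unfolding g_def by linarith
  qed
  define a2 where "a2 r = r + Kp/2 * (r * \<bar>r\<bar>) + (\<Sum>i\<in>UNIV. gamma i * g i (c * r))" for r
  have a2cont: "\<And>r. isCont a2 r" unfolding a2_def[abs_def]
    by (intro continuous_intros isCont_o2[OF _ gcont, unfolded o_def] ) auto
  have a2sm: "strict_mono a2"
  proof (rule strict_monoI)
    fix r s :: real assume rs: "r < s"
    have "Kp/2 * (r * \<bar>r\<bar>) \<le> Kp/2 * (s * \<bar>s\<bar>)" using rr_mono[OF rs] Kp(1) by simp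
    moreover have "(\<Sum>i\<in>UNIV. gamma i * g i (c * r)) \<le> (\<Sum>i\<in>UNIV. gamma i * g i (c * s))"
      by (rule sum_mono) (use gamma_pos gmono c(1) rs in \<open>auto intro!: mult_left_mono\<close>)
    ultimately show "a2 r < a2 s" unfolding a2_def using rs by linarith
  qed
  have a20: "a2 0 = 0" unfolding a2_def using g0 by simp
  have a2ge: "\<And>r. r \<ge> 0 \<Longrightarrow> a2 r \<ge> r"
  proof -
    fix r :: real assume r: "r \<ge> 0"
    have "0 \<le> Kp/2 * (r * \<bar>r\<bar>)" using Kp(1) r by simp
    moreover have "0 \<le> (\<Sum>i\<in>UNIV. gamma i * g i (c * r))"
      by (rule sum_nonneg) (use gamma_pos gmono[of 0 "c * r"] g0 c(1) r in \<open>auto intro: mult_nonneg_nonneg less_imp_le\<close>)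
    ultimately show "a2 r \<ge> r" unfolding a2_def by linarith
  qed
  have a2le: "\<And>r. r \<le> 0 \<Longrightarrow> a2 r \<le> r"
  proof -
    fix r :: real assume r: "r \<le> 0"
    have "Kp/2 * (r * \<bar>r\<bar>) \<le> 0" using Kp(1) r by (simp add: mult_nonneg_nonpos mult_nonpos_nonneg)
    moreover have "(\<Sum>i\<in>UNIV. gamma i * g i (c * r)) \<le> 0"
      by (rule sum_nonpos) (use gamma_pos gmono[of "c * r" 0] g0 c(1) r in \<open>auto intro: mult_nonneg_nonpos less_imp_le simp: mult_le_0_iff\<close>)
    ultimately show "a2 r \<le> r" unfolding a2_def by linarith
  qed
  define \<beta> where "\<beta> = inv a2"
  note ip = inv_props[OF a2cont a2sm a20 a2ge a2le, folded \<beta>_def]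
  have bmono: "\<And>s t. s \<le> t \<Longrightarrow> \<beta> s \<le> \<beta> t" using ip(3) by (simp add: strict_mono_less_eq)
  define a1 where "a1 r = m/2 * r\<^sup>2" for r :: real
  define a3 where "a3 s = eta/2 * (\<beta> s * \<bar>\<beta> s\<bar>)" for s
  have Vform: "lure_V P C gamma psi x = (1/2) * (x \<bullet> (P *v x)) + (\<Sum>i\<in>UNIV. gamma i * \<bar>H i ((C *v x) $ i)\<bar>)" for x
    unfolding lure_V_def Veq by simp
  have sumnn: "0 \<le> (\<Sum>i\<in>UNIV. gamma i * \<bar>H i ((C *v x) $ i)\<bar>)" for x
    using gamma_pos by (intro sum_nonneg mult_nonneg_nonneg) (auto simp: less_imp_le)
  have Vlow: "a1 (norm x) \<le> lure_V P C gamma psi x" for x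
    unfolding Vform a1_def using m(2)[of x] sumnn[of x] by simp
  have Vup: "lure_V P C gamma psi x \<le> a2 (norm x)" for x
  proof -
    have "(\<Sum>i\<in>UNIV. gamma i * \<bar>H i ((C *v x) $ i)\<bar>) \<le> (\<Sum>i\<in>UNIV. gamma i * g i (c * norm x))"
    proof (rule sum_mono)
      fix i
      have "\<bar>(C *v x) $ i\<bar> \<le> c * norm x"
        using component_le_norm_cart[of "C *v x" i] c(2)[of x] by linarith
      then have "\<bar>H i ((C *v x) $ i)\<bar> \<le> g i (c * norm x)" by (rule absH)
      then show "gamma i * \<bar>H i ((C *v x) $ i)\<bar> \<le> gamma i * g i (c * norm x)"
        using gamma_pos by (simp add: mult_left_mono less_imp_le)
    qed
    moreover have "(1/2) * (x \<bullet> (P *v x)) \<le> Kp/2 * (norm x * \<bar>norm x\<bar>)"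
      using Kp(2)[of x] by (simp add: power2_eq_square)
    moreover have "0 \<le> norm x" by simp
    ultimately show ?thesis unfolding Vform a2_def by linarith
  qed
  have Vnn: "lure_V P C gamma psi x \<ge> 0" for x
  proof -
    have "0 \<le> a1 (norm x)" unfolding a1_def using m(1) by simp
    then show ?thesis using Vlow[of x] by linarith
  qed
  have Lie: "a \<le> - eta/2 * (norm x)\<^sup>2"
    if a: "a \<in> lie_set (gen_grad P C gamma psi x) (F_kras A B C psi x)" for a x
  proof -
    obtain f where f: "f \<in> F_kras A B C psi x" "\<And>v. v \<in> gen_grad P C gamma psi x \<Longrightarrow> v \<bullet> f = a"
      using a unfolding lie_set_def by blast
    obtain w where w: "f = A *v x - B *v w" "w \<in> Kras psi (C *v x)"
      using f(1) unfolding F_kras_def by blast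
    have "P *v x + transpose C *v (diagm gamma *v w) \<in> gen_grad P C gamma psi x"
      using w(2) unfolding gen_grad_def by blast
    then have aeq: "a = (P *v x + transpose C *v (diagm gamma *v w)) \<bullet> (A *v x - B *v w)"
      using f(2) w(1) by metis
    have Psym: "transpose P = P" using P_pos unfolding pos_def_def by blast
    note ineq = lmi_ineq[OF LMI Psym, of x w]
    have sec_sum: "w \<bullet> (diagm (\<lambda>i. ereal_recip (zeta $ i)) *v w) \<le> (C *v x) \<bullet> w"
    proof -
      have "w \<bullet> (diagm (\<lambda>i. ereal_recip (zeta $ i)) *v w) = (\<Sum>i\<in>UNIV. ereal_recip (zeta $ i) * (w $ i)\<^sup>2)"
        unfolding inner_vec_def diagm_mv by (simp add: power2_eq_square algebra_simps)
      also have "\<dots> \<le> (\<Sum>i\<in>UNIV. w $ i * (C *v x) $ i)"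
      proof (rule sum_mono)
        fix i
        have "w $ i \<in> kras (psi i) ((C *v x) $ i)" using w(2) unfolding Kras_def by blast
        then show "ereal_recip (zeta $ i) * (w $ i)\<^sup>2 \<le> w $ i * (C *v x) $ i"
          by (rule kras_sector[OF sec])
      qed
      also have "\<dots> = (C *v x) \<bullet> w" unfolding inner_vec_def by (simp add: mult.commute)
      finally show ?thesis .
    qed
    have "x \<bullet> x = (norm x)\<^sup>2" by (simp add: power2_norm_eq_inner)
    then show ?thesis using aeq ineq sec_sum by simp
  qed
  have a3V: "a3 (lure_V P C gamma psi x) \<le> eta/2 * (norm x)\<^sup>2" for x
  proof -
    let ?V = "lure_V P C gamma psi x"
    have b0: "0 \<le> \<beta> ?V" using bmono[OF Vnn[of x]] ip(5) by simp
    have b1: "\<beta> ?V \<le> norm x" using bmono[OF Vup[of x]] ip(2) by simp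
    have "\<beta> ?V * \<bar>\<beta> ?V\<bar> \<le> (norm x)\<^sup>2" using b0 b1 by (simp add: power2_eq_square mult_mono)
    then show ?thesis unfolding a3_def using eta_pos by simp
  qed
  have K1: "class_Kinf a1"
  proof (rule Kinf_intro)
    show "continuous_on {0..} a1" unfolding a1_def by (intro continuous_intros)
    show "a1 r < a1 s" if "0 \<le> r" "r < s" for r s
      unfolding a1_def using that m(1) by (simp add: power_strict_mono)
    show "a1 0 = 0" unfolding a1_def by simp
    show "filterlim a1 at_top at_top" unfolding a1_def
      by (rule filterlim_tendsto_pos_mult_at_top[OF tendsto_const]) (use m(1) in \<open>auto intro: filterlim_pow_at_top filterlim_ident\<close>)
  qed
  have K2: "class_Kinf a2"
  proof (rule Kinf_intro)
    show "continuous_on {0..} a2" using a2cont by (intro continuous_at_imp_continuous_on) auto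
    show "a2 r < a2 s" if "0 \<le> r" "r < s" for r s using a2sm that by (simp add: strict_mono_less)
    show "a2 0 = 0" by (rule a20)
    show "filterlim a2 at_top at_top"
      by (rule filterlim_at_top_mono[OF filterlim_ident]) (use a2ge in \<open>auto intro: eventually_mono[OF eventually_ge_at_top[of 0]]\<close>)
  qed
  have btop: "filterlim \<beta> at_top at_top"
    unfolding filterlim_at_top
  proof
    fix Z :: real
    show "eventually (\<lambda>s. Z \<le> \<beta> s) at_top"
      using eventually_ge_at_top[of "a2 Z"] by eventually_elim (use bmono ip(2) in metis)
  qed
  have K3: "class_Kinf a3"
  proof (rule Kinf_intro)
    show "continuous_on {0..} a3" unfolding a3_def
      by (intro continuous_at_imp_continuous_on ballI continuous_intros ip(4))
    show "a3 r < a3 s" if "0 \<le> r" "r < s" for r s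
    proof -
      have "0 \<le> \<beta> r" using bmono[OF that(1)] ip(5) by simp
      moreover have "\<beta> r < \<beta> s" using ip(3) that(2) by (simp add: strict_mono_less)
      ultimately have "\<beta> r * \<bar>\<beta> r\<bar> < \<beta> s * \<bar>\<beta> s\<bar>"
        by (simp add: mult_strict_mono)
      then show ?thesis unfolding a3_def using eta_pos by simp
    qed
    show "a3 0 = 0" unfolding a3_def using ip(5) by simp
    have "filterlim (\<lambda>s. eta/2 * \<beta> s) at_top at_top"
      by (rule filterlim_tendsto_pos_mult_at_top[OF tendsto_const _ btop]) (use eta_pos in simp)
    moreover have "eventually (\<lambda>s. eta/2 * \<beta> s \<le> a3 s) at_top"
    proof -
      have "eventually (\<lambda>s. 1 \<le> \<beta> s) at_top" using btop unfolding filterlim_at_top by blast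
      then show ?thesis
      proof eventually_elim
        case (elim s)
        then have "\<beta> s \<le> \<beta> s * \<bar>\<beta> s\<bar>" by (simp add: mult_le_cancel_left1)
        then show ?case unfolding a3_def using eta_pos by simp
      qed
    qed
    ultimately show "filterlim a3 at_top at_top" by (rule filterlim_at_top_mono)
  qed
  have LieSup: "Sup (ereal ` lie_set (gen_grad P C gamma psi x) (F_kras A B C psi x))
           \<le> - ereal (a3 (lure_V P C gamma psi x))" for x
  proof (rule Sup_least)
    fix e assume "e \<in> ereal ` lie_set (gen_grad P C gamma psi x) (F_kras A B C psi x)"
    then obtain a where a: "a \<in> lie_set (gen_grad P C gamma psi x) (F_kras A B C psi x)" "e = ereal a" by blast
    have "a \<le> - a3 (lure_V P C gamma psi x)" using Lie[OF a(1)] a3V[of x] by simp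
    then show "e \<le> - ereal (a3 (lure_V P C gamma psi x))" using a(2) by simp
  qed
  show ?thesis using K1 K2 K3 Vlow Vup LieSup by blast
qed

end
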